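(* Let $E$ and $F$ be topological vector spaces over a valued field $\mathbb{K}$, $f\colon U\to F$ a continuous map on a subset $U\subseteq E$, $D\subseteq U$ a dense subset, and $\sigma>0$. If $f$ is not $C^{0,\sigma}$, then there exist $x_0\in U$ and a gauge $q$ on $F$ such that, for each neighbourhood $V\subseteq U$ of $x_0$ and each gauge $p$ on $E$, there exist $x,y\in V\cap D$ with $q(f(x)-f(y))>p(x-y)^\sigma$.
   Context: A valued field is a field with an absolute value $|.|$ defining a non-discrete topology; vector spaces are Hausdorff. A gauge on a topological $\mathbb{K}$-vector space $E$ is a map $q\colon E\to[0,\infty[$ with $q(tx)=|t|q(x)$ for $t\in\mathbb{K}$, $x\in E$, such that $\{x: q(x)<r\}$ is a $0$-neighbourhood for each $r>0$. A map $g\colon U\to F$ on $U\subseteq E$ is $C^{0,\sigma}$ if for every $x_0\in U$ and gauge $q$ on $F$ there exist a gauge $p$ on $E$ and a neighbourhood $V\subseteq U$ of $x_0$ with $q(g(y)-g(x))\le p(y-x)^\sigma$ for all $x,y\in V$. *)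

theory Defs
  imports "HOL-Analysis.Analysis"
begin

text \<open>A valued field: a field 'k with an absolute value av whose induced topology
  is non-discrete (equivalently, some t has 0 < av t < 1).\<close>
definition valued_field :: "('k::field \<Rightarrow> real) \<Rightarrow> bool" where
  "valued_field av \<longleftrightarrow>
     (\<forall>x. 0 \<le> av x) \<and> (\<forall>x. av x = 0 \<longleftrightarrow> x = 0) \<and>
     (\<forall>x y. av (x * y) = av x * av y) \<and> (\<forall>x y. av (x + y) \<le> av x + av y) \<and>
     (\<exists>t. 0 < av t \<and> av t < 1)"

definition tvs :: "('k::field \<Rightarrow> real) \<Rightarrow> ('k \<Rightarrow> 'e::{ab_group_add,t2_space} \<Rightarrow> 'e) \<Rightarrow> bool" where
  "tvs av sm \<longleftrightarrow>
     (\<forall>x. sm 1 x = x) \<and>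
     (\<forall>a b x. sm (a * b) x = sm a (sm b x)) \<and>
     (\<forall>a b x. sm (a + b) x = sm a x + sm b x) \<and>
     (\<forall>a x y. sm a (x + y) = sm a x + sm a y) \<and>
     continuous_on UNIV (\<lambda>z::'e \<times> 'e. fst z + snd z) \<and>
     (\<forall>t0 x0 W. open W \<and> sm t0 x0 \<in> W \<longrightarrow>
        (\<exists>\<delta>>0. \<exists>N. open N \<and> x0 \<in> N \<and>
           (\<forall>t x. av (t - t0) < \<delta> \<and> x \<in> N \<longrightarrow> sm t x \<in> W)))"

definition gauge_on :: "('k::field \<Rightarrow> real) \<Rightarrow> ('k \<Rightarrow> 'e::{ab_group_add,topological_space} \<Rightarrow> 'e) \<Rightarrow> ('e \<Rightarrow> real) \<Rightarrow> bool" where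
  "gauge_on av sm q \<longleftrightarrow>
     (\<forall>x. 0 \<le> q x) \<and> (\<forall>t x. q (sm t x) = av t * q x) \<and>
     (\<forall>r>0. \<exists>S. open S \<and> 0 \<in> S \<and> S \<subseteq> {x. q x < r})"

definition nbhd_in :: "'e::topological_space set \<Rightarrow> 'e \<Rightarrow> 'e set \<Rightarrow> bool" where
  "nbhd_in U x0 V \<longleftrightarrow> V \<subseteq> U \<and> (\<exists>W. open W \<and> x0 \<in> W \<and> U \<inter> W \<subseteq> V)"

definition C0sigma ::
  "('k::field \<Rightarrow> real) \<Rightarrow> ('k \<Rightarrow> 'e::{ab_group_add,topological_space} \<Rightarrow> 'e)
   \<Rightarrow> ('k \<Rightarrow> 'f::{ab_group_add,topological_space} \<Rightarrow> 'f) \<Rightarrow> 'e set \<Rightarrow> ('e \<Rightarrow> 'f) \<Rightarrow> real \<Rightarrow> bool" where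
  "C0sigma av se sf U g \<sigma> \<longleftrightarrow>
     (\<forall>x0\<in>U. \<forall>q. gauge_on av sf q \<longrightarrow>
        (\<exists>p V. gauge_on av se p \<and> nbhd_in U x0 V \<and>
           (\<forall>x\<in>V. \<forall>y\<in>V. q (g y - g x) \<le> p (y - x) powr \<sigma>)))"

end

theory Submission
  imports Defs
begin

definition mink :: "('k::field \<Rightarrow> real) \<Rightarrow> ('k \<Rightarrow> 'e \<Rightarrow> 'e) \<Rightarrow> 'e set \<Rightarrow> 'e \<Rightarrow> real" where
  "mink av sm B v = Inf {av s | s. s \<noteq> 0 \<and> sm (inverse s) v \<in> B}"

locale vt =
  fixes av :: "'k::field \<Rightarrow> real" and sm :: "'k \<Rightarrow> 'e::{ab_group_add,t2_space} \<Rightarrow> 'e"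
  assumes vf: "valued_field av" and tv: "tvs av sm"
begin

lemma av_nonneg: "0 \<le> av x" using vf unfolding valued_field_def by blast
lemma av_eq0: "av x = 0 \<longleftrightarrow> x = 0" using vf unfolding valued_field_def by blast
lemma av_mult: "av (x * y) = av x * av y" using vf unfolding valued_field_def by blast
lemma av_zero[simp]: "av 0 = 0" using av_eq0 by blast
lemma av_pos: "x \<noteq> 0 \<Longrightarrow> 0 < av x" using av_nonneg av_eq0 by (metis less_eq_real_def)
lemma av_one[simp]: "av 1 = 1"
proof -
  have "av 1 = av 1 * av 1" using av_mult[of 1 1] by simp
  moreover have "av 1 \<noteq> 0" using av_eq0 by simp
  ultimately show ?thesis by (metis mult_cancel_right1)
qed
lemma av_inv: "av (inverse s) = inverse (av s)"
proof (cases "s = 0")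
  case True then show ?thesis by simp
next
  case False
  then have "av (inverse s) * av s = 1" using av_mult[of "inverse s" s] by simp
  then show ?thesis by (metis inverse_unique mult.commute)
qed
lemma av_pow: "av (x ^ n) = av x ^ n"
  by (induction n) (auto simp: av_mult)

lemma ex_t0: "\<exists>t. 0 < av t \<and> av t < 1" using vf unfolding valued_field_def by blast

lemma small: assumes "0 < d" shows "\<exists>s. s \<noteq> 0 \<and> av s < d"
proof -
  obtain t where t: "0 < av t" "av t < 1" using ex_t0 by blast
  obtain n where n: "av t ^ n < d" using real_arch_pow_inv[OF assms t(2)] by blast
  have "t \<noteq> 0" using t(1) by auto
  then have "t ^ n \<noteq> 0" by simp
  then show ?thesis using n by (intro exI[of _ "t ^ n"]) (simp add: av_pow)
qed

lemma between_ex: "\<exists>\<rho>. 0 < \<rho> \<and> \<rho> < 1 \<and> (\<forall>m>0. \<exists>s. \<rho> * m \<le> av s \<and> av s < m)"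
proof -
  obtain t where t: "0 < av t" "av t < 1" using ex_t0 by blast
  have "\<forall>m>0. \<exists>s. av t * m \<le> av s \<and> av s < m"
  proof (intro allI impI)
    fix m :: real assume m: "0 < m"
    have "1 < inverse (av t)" using t by (simp add: one_less_inverse)
    then obtain n where n: "m < inverse (av t) ^ n" using real_arch_pow by blast
    define u where "u = inverse t ^ n"
    have au: "av u = inverse (av t) ^ n" unfolding u_def by (simp add: av_pow av_inv)
    have "\<exists>k. av u * av t ^ k < m"
    proof -
      have "0 < m / av u" using m au t by simp
      then obtain k where "av t ^ k < m / av u" using real_arch_pow_inv t by blast
      moreover have "av u > 0" using au t by simp
      ultimately have "av u * av t ^ k < m" by (simp add: pos_less_divide_eq mult.commute)
      then show ?thesis by blast
    qed
    then obtain k where k: "av u * av t ^ k < m" "\<forall>j<k. \<not> av u * av t ^ j < m"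
      using exists_least_iff[of "\<lambda>k. av u * av t ^ k < m"] by blast
    have "k \<noteq> 0"
    proof
      assume "k = 0"
      then have "av u < m" using k(1) by simp
      then show False using n au by simp
    qed
    then obtain j where j: "k = Suc j" by (cases k) auto
    have "m \<le> av u * av t ^ j" using k(2) j by (meson lessI not_less)
    then have "av t * m \<le> av u * av t ^ k" using j t by (simp add: field_simps)
    then show "\<exists>s. av t * m \<le> av s \<and> av s < m"
      using k(1) by (intro exI[of _ "u * t ^ k"]) (simp add: av_mult av_pow)
  qed
  then show ?thesis using t by blast
qed

definition rho where "rho = (SOME \<rho>. 0 < \<rho> \<and> \<rho> < 1 \<and> (\<forall>m>0. \<exists>s. \<rho> * m \<le> av s \<and> av s < m))"
lemma rho_all: "0 < rho \<and> rho < 1 \<and> (\<forall>m>0. \<exists>s. rho * m \<le> av s \<and> av s < m)"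
  unfolding rho_def by (rule someI_ex[OF between_ex])
lemma rho1: "0 < rho" using rho_all by (rule conjunct1)
lemma rho2: "rho < 1" using rho_all[THEN conjunct2, THEN conjunct1] .
lemma rho3: "0 < m \<Longrightarrow> \<exists>s. rho * m \<le> av s \<and> av s < m" using rho_all[THEN conjunct2, THEN conjunct2] by blast

lemma tv_unf: "(\<forall>x. sm 1 x = x) \<and>
     (\<forall>a b x. sm (a * b) x = sm a (sm b x)) \<and>
     (\<forall>a b x. sm (a + b) x = sm a x + sm b x) \<and>
     (\<forall>a x y. sm a (x + y) = sm a x + sm a y) \<and>
     continuous_on UNIV (\<lambda>z::'e \<times> 'e. fst z + snd z) \<and>
     (\<forall>t0 x0 W. open W \<and> sm t0 x0 \<in> W \<longrightarrow>
        (\<exists>\<delta>>0. \<exists>N. open N \<and> x0 \<in> N \<and>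
           (\<forall>t x. av (t - t0) < \<delta> \<and> x \<in> N \<longrightarrow> sm t x \<in> W)))"
  using tv unfolding tvs_def .
lemmas sm_one[simp] = tv_unf[THEN conjunct1, rule_format]
lemmas sm_assoc = tv_unf[THEN conjunct2, THEN conjunct1, rule_format]
lemmas sm_addl = tv_unf[THEN conjunct2, THEN conjunct2, THEN conjunct1, rule_format]
lemmas sm_addr = tv_unf[THEN conjunct2, THEN conjunct2, THEN conjunct2, THEN conjunct1, rule_format]
lemma add_cont: "continuous_on UNIV (\<lambda>z::'e \<times> 'e. fst z + snd z)" using tv_unf[THEN conjunct2, THEN conjunct2, THEN conjunct2, THEN conjunct2, THEN conjunct1] .
lemma sm_cont: "open W \<Longrightarrow> sm t0 x0 \<in> W \<Longrightarrow>
   \<exists>\<delta>>0. \<exists>N. open N \<and> x0 \<in> N \<and> (\<forall>t x. av (t - t0) < \<delta> \<and> x \<in> N \<longrightarrow> sm t x \<in> W)"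
  using tv_unf[THEN conjunct2, THEN conjunct2, THEN conjunct2, THEN conjunct2, THEN conjunct2] by blast

lemma sm_zero_left[simp]: "sm 0 x = 0"
  using sm_addl[of 0 0 x] by simp
lemma sm_zero_right[simp]: "sm t 0 = 0"
  using sm_assoc[of t 0 0] by simp
lemma sm_minus: "sm (-1) x = - x"
proof -
  have "sm (1 + -1) x = sm 1 x + sm (-1) x" by (rule sm_addl)
  then have "0 = x + sm (-1) x" by simp
  then show ?thesis by (metis eq_neg_iff_add_eq_0 add.commute)
qed
lemma sm_inv_cancel: "s \<noteq> 0 \<Longrightarrow> sm s (sm (inverse s) v) = v"
  using sm_assoc[of s "inverse s" v] by simp

lemma open_pre: assumes "open W" shows "open {x. sm c x \<in> W}"
proof (subst open_subopen, intro ballI)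
  fix x assume "x \<in> {x. sm c x \<in> W}"
  then have "sm c x \<in> W" by simp
  from sm_cont[OF assms this] obtain d N where NN: "d > 0" "open N" "x \<in> N"
    "\<forall>t x. av (t - c) < d \<and> x \<in> N \<longrightarrow> sm t x \<in> W" by blast
  have "N \<subseteq> {x. sm c x \<in> W}"
  proof
    fix y assume "y \<in> N"
    then have "av (c - c) < d \<and> y \<in> N" using NN(1) by simp
    then have "sm c y \<in> W" using NN(4) by blast
    then show "y \<in> {x. sm c x \<in> W}" by simp
  qed
  then show "\<exists>T. open T \<and> x \<in> T \<and> T \<subseteq> {x. sm c x \<in> W}" using NN(2,3) by blast
qed

lemma closed_pre: assumes "closed K" shows "closed {x. sm c x \<in> K}"
proof -
  have eq: "- {x. sm c x \<in> K} = {x. sm c x \<in> - K}" by auto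
  have "open (- K)" using assms by (simp add: closed_def)
  then have "open {x. sm c x \<in> - K}" by (rule open_pre)
  then show ?thesis unfolding closed_def eq .
qed

lemma sub_cont:
  fixes a b :: 'e
  assumes "open W" "a - b \<in> W"
  shows "\<exists>A B. open A \<and> open B \<and> a \<in> A \<and> b \<in> B \<and> (\<forall>x\<in>A. \<forall>y\<in>B. x - y \<in> W)"
proof -
  let ?g = "\<lambda>z::'e \<times> 'e. fst z + snd z"
  have "\<forall>B. open B \<longrightarrow> open (?g -` B \<inter> UNIV)"
    using continuous_on_open_vimage[OF open_UNIV, of ?g] add_cont by (rule iffD1)
  then have "open (?g -` W \<inter> UNIV)" using assms(1) by blast
  moreover have "(a, -b) \<in> (?g -` W \<inter> UNIV)" using assms(2) by simp
  ultimately obtain A B' where AB: "open A" "open B'" "(a, -b) \<in> A \<times> B'"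
    "A \<times> B' \<subseteq> (?g -` W \<inter> UNIV)"
    by (rule open_prod_elim)
  define B where "B = {y. sm (-1) y \<in> B'}"
  have "open B" unfolding B_def using AB(2) by (rule open_pre)
  moreover have "b \<in> B" using AB(3) unfolding B_def by (simp add: sm_minus)
  moreover have "\<forall>x\<in>A. \<forall>y\<in>B. x - y \<in> W"
  proof (intro ballI)
    fix x y assume "x \<in> A" "y \<in> B"
    then have "(x, -y) \<in> A \<times> B'" unfolding B_def by (simp add: sm_minus)
    then have "(x, -y) \<in> ?g -` W" using AB(4) by blast
    then show "x - y \<in> W" by simp
  qed
  ultimately show ?thesis using AB(1,3) by blast
qed

lemma absorb: assumes "open N" "0 \<in> N" shows "\<exists>s. s \<noteq> 0 \<and> sm (inverse s) v \<in> N"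
proof -
  have "sm 0 v \<in> N" using assms(2) by simp
  from sm_cont[OF assms(1) this] obtain d M where MM: "d > 0" "open M" "v \<in> M"
    "\<forall>t x. av (t - 0) < d \<and> x \<in> M \<longrightarrow> sm t x \<in> N" by blast
  obtain t where t: "t \<noteq> 0" "av t < d" using small MM(1) by blast
  have "sm t v \<in> N" using MM(4) t(2) MM(3) by simp
  then show ?thesis using t(1) by (intro exI[of _ "inverse t"]) simp
qed

context
  fixes B :: "'e set" and N :: "'e set"
  assumes N: "open N" "0 \<in> N" "N \<subseteq> B"
begin

lemma mink_ne: "{av s |s. s \<noteq> 0 \<and> sm (inverse s) v \<in> B} \<noteq> {}"
proof -
  obtain s where "s \<noteq> 0" "sm (inverse s) v \<in> N" using absorb[OF N(1,2)] by blast
  then show ?thesis using N(3) by blast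
qed

lemma mink_bdd: "bdd_below {av s |s. s \<noteq> 0 \<and> sm (inverse s) v \<in> B}"
  by (rule bdd_belowI[of _ 0]) (auto simp: av_nonneg)

lemma mink_le: "s \<noteq> 0 \<Longrightarrow> sm (inverse s) v \<in> B \<Longrightarrow> mink av sm B v \<le> av s"
  unfolding mink_def by (rule cInf_lower[OF _ mink_bdd]) blast

lemma mink_geI: "(\<And>s. s \<noteq> 0 \<Longrightarrow> sm (inverse s) v \<in> B \<Longrightarrow> c \<le> av s) \<Longrightarrow> c \<le> mink av sm B v"
  unfolding mink_def by (rule cInf_greatest[OF mink_ne]) blast

lemma mink_nonneg: "0 \<le> mink av sm B v"
  by (rule mink_geI) (rule av_nonneg)

lemma mink_lessD: "mink av sm B v < e \<Longrightarrow> \<exists>s. s \<noteq> 0 \<and> sm (inverse s) v \<in> B \<and> av s < e"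
  unfolding mink_def using cInf_lessD[OF mink_ne] by blast

lemma mink_zero: "mink av sm B 0 = 0"
proof (rule antisym)
  show "mink av sm B 0 \<le> 0"
  proof (rule ccontr)
    assume "\<not> mink av sm B 0 \<le> 0"
    then have "0 < mink av sm B 0" by simp
    then obtain s where s: "s \<noteq> 0" "av s < mink av sm B 0" using small by blast
    have "sm (inverse s) 0 \<in> B" using N(2,3) by auto
    then have "mink av sm B 0 \<le> av s" using s(1) by (rule mink_le[rotated])
    then show False using s(2) by simp
  qed
  show "0 \<le> mink av sm B 0" by (rule mink_nonneg)
qed

lemma mink_scale_le:
  assumes t: "t \<noteq> 0" shows "mink av sm B (sm t v) \<le> av t * mink av sm B v"
proof -
  have at: "0 < av t" using av_pos t .
  have "mink av sm B (sm t v) / av t \<le> mink av sm B v"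
  proof (rule mink_geI)
    fix s assume s: "s \<noteq> 0" "sm (inverse s) v \<in> B"
    have "inverse (t * s) * t = inverse s" using t s(1) by (simp add: field_simps)
    then have "sm (inverse (t * s)) (sm t v) = sm (inverse s) v" by (metis sm_assoc)
    have ts: "t * s \<noteq> 0" using t s(1) by simp
    have "sm (inverse (t * s)) (sm t v) \<in> B" using s(2) \<open>sm (inverse (t * s)) (sm t v) = sm (inverse s) v\<close> by simp
    then have "mink av sm B (sm t v) \<le> av (t * s)" using ts by (rule mink_le[rotated])
    then have "mink av sm B (sm t v) \<le> av t * av s" by (simp add: av_mult)
    then show "mink av sm B (sm t v) / av t \<le> av s" using at by (simp add: pos_divide_le_eq mult.commute)
  qed
  then show ?thesis using at by (simp add: pos_divide_le_eq mult.commute)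
qed

lemma mink_hom: "mink av sm B (sm t v) = av t * mink av sm B v"
proof (cases "t = 0")
  case True then show ?thesis by (simp add: mink_zero)
next
  case False
  have at: "0 < av t" using av_pos False .
  have "mink av sm B v = mink av sm B (sm (inverse t) (sm t v))"
    using sm_assoc[of "inverse t" t v] False by simp
  also have "\<dots> \<le> av (inverse t) * mink av sm B (sm t v)"
    using False by (intro mink_scale_le) simp
  finally have h: "mink av sm B v \<le> inverse (av t) * mink av sm B (sm t v)"
    by (simp only: av_inv)
  have "av t * mink av sm B v \<le> av t * (inverse (av t) * mink av sm B (sm t v))"
    using mult_left_mono[OF h, of "av t"] at by simp
  also have "\<dots> = mink av sm B (sm t v)" using at by (simp add: mult.assoc[symmetric])
  finally have "av t * mink av sm B v \<le> mink av sm B (sm t v)" .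
  with mink_scale_le[OF False, of v] show ?thesis by simp
qed

lemma mink_gauge: "gauge_on av sm (mink av sm B)"
  unfolding gauge_on_def
proof (intro conjI allI impI)
  fix x show "0 \<le> mink av sm B x" by (rule mink_nonneg)
next
  fix t x show "mink av sm B (sm t x) = av t * mink av sm B x" by (rule mink_hom)
next
  fix r :: real assume r: "0 < r"
  obtain s where s: "s \<noteq> 0" "av s < r" using small r by blast
  let ?S = "{x. sm (inverse s) x \<in> N}"
  have "open ?S" using N(1) by (rule open_pre)
  moreover have "0 \<in> ?S" using N(2) by simp
  moreover have "?S \<subseteq> {x. mink av sm B x < r}"
  proof
    fix x assume "x \<in> ?S"
    then have "sm (inverse s) x \<in> B" using N(3) by blast
    then have "mink av sm B x \<le> av s" using s(1) by (rule mink_le[rotated])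
    then show "x \<in> {x. mink av sm B x < r}" using s(2) by simp
  qed
  ultimately show "\<exists>S. open S \<and> 0 \<in> S \<and> S \<subseteq> {x. mink av sm B x < r}" by blast
qed

lemma mink_dom:
  assumes g: "gauge_on av sm g" and Bg: "B \<subseteq> {x. g x < 1}"
  shows "g v \<le> mink av sm B v"
proof (rule mink_geI)
  fix s assume s: "s \<noteq> 0" "sm (inverse s) v \<in> B"
  have hom: "\<forall>t x. g (sm t x) = av t * g x" using g unfolding gauge_on_def by blast
  have "g (sm (inverse s) v) < 1" using s(2) Bg by blast
  moreover have "g v = av s * g (sm (inverse s) v)"
  proof -
    have "g v = g (sm s (sm (inverse s) v))" using sm_inv_cancel[OF s(1), of v] by simp
    also have "\<dots> = av s * g (sm (inverse s) v)" using hom by blast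
    finally show ?thesis .
  qed
  moreover have "0 \<le> av s" by (rule av_nonneg)
  ultimately show "g v \<le> av s" by (simp add: mult_left_le)
qed

lemma mink_usc:
  assumes "open B" "mink av sm B v < e"
  shows "\<exists>M. open M \<and> v \<in> M \<and> (\<forall>w\<in>M. mink av sm B w < e)"
proof -
  obtain s where s: "s \<noteq> 0" "sm (inverse s) v \<in> B" "av s < e" using mink_lessD[OF assms(2)] by blast
  let ?M = "{w. sm (inverse s) w \<in> B}"
  have "open ?M" using assms(1) by (rule open_pre)
  moreover have "v \<in> ?M" using s(2) by simp
  moreover have "\<forall>w\<in>?M. mink av sm B w < e"
  proof
    fix w assume "w \<in> ?M"
    then have "mink av sm B w \<le> av s" using s(1) by (intro mink_le) auto
    then show "mink av sm B w < e" using s(3) by simp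
  qed
  ultimately show ?thesis by blast
qed

lemma mink_lsc:
  assumes cB: "closed B" and bal: "\<forall>t x. av t \<le> 1 \<and> x \<in> B \<longrightarrow> sm t x \<in> B"
    and pos: "0 < mink av sm B v"
  shows "\<exists>M. open M \<and> v \<in> M \<and> (\<forall>w\<in>M. rho * mink av sm B v \<le> mink av sm B w)"
proof -
  obtain s where s: "rho * mink av sm B v \<le> av s" "av s < mink av sm B v" using rho3[OF pos] by blast
  have "0 < rho * mink av sm B v" using rho1 pos by simp
  then have "0 < av s" using s(1) by linarith
  then have s0: "s \<noteq> 0" by auto
  let ?M = "{w. sm (inverse s) w \<in> - B}"
  have "open ?M" using cB by (intro open_pre) (simp add: open_Compl)
  moreover have "v \<in> ?M"
  proof (rule ccontr)
    assume "v \<notin> ?M"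
    then have "sm (inverse s) v \<in> B" by simp
    then have "mink av sm B v \<le> av s" using s0 by (rule mink_le[rotated])
    then show False using s(2) by simp
  qed
  moreover have "\<forall>w\<in>?M. rho * mink av sm B v \<le> mink av sm B w"
  proof
    fix w assume w: "w \<in> ?M"
    have "av s \<le> mink av sm B w"
    proof (rule mink_geI)
      fix s' assume s': "s' \<noteq> 0" "sm (inverse s') w \<in> B"
      show "av s \<le> av s'"
      proof (rule ccontr)
        assume "\<not> av s \<le> av s'"
        then have lt: "av s' < av s" by simp
        have "av (inverse s * s') = av s' / av s" by (simp only: av_mult av_inv) (simp add: divide_inverse mult.commute)
        also have "\<dots> \<le> 1" using lt \<open>0 < av s\<close> by simp
        finally have "sm (inverse s * s') (sm (inverse s') w) \<in> B" using bal s'(2) by blast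
        moreover have "inverse s * s' * inverse s' = inverse s" using s'(1) by simp
        ultimately have "sm (inverse s) w \<in> B" by (metis sm_assoc)
        then show False using w by simp
      qed
    qed
    then show "rho * mink av sm B v \<le> mink av sm B w" using s(1) by simp
  qed
  ultimately show ?thesis by blast
qed

end

end

lemma gauge_scale:
  assumes g: "gauge_on av sm g" and K: "0 < (K::real)"
  shows "gauge_on av sm (\<lambda>v. K * g v)"
  unfolding gauge_on_def
proof (intro conjI allI impI)
  have g1: "\<forall>x. 0 \<le> g x" and g2: "\<forall>t x. g (sm t x) = av t * g x"
    and g3: "\<forall>r>0. \<exists>S. open S \<and> 0 \<in> S \<and> S \<subseteq> {x. g x < r}"
    using g unfolding gauge_on_def by blast+
  fix x show "0 \<le> K * g x" using g1 K by simp
next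
  have g2: "\<forall>t x. g (sm t x) = av t * g x" using g unfolding gauge_on_def by blast
  fix t x show "K * g (sm t x) = av t * (K * g x)" using g2 by simp
next
  have g3: "\<forall>r>0. \<exists>S. open S \<and> 0 \<in> S \<and> S \<subseteq> {x. g x < r}" using g unfolding gauge_on_def by blast
  fix r :: real assume r: "0 < r"
  then have "0 < r / K" using K by simp
  then obtain S where S: "open S" "0 \<in> S" "S \<subseteq> {x. g x < r / K}" using g3 by blast
  have "S \<subseteq> {x. K * g x < r}"
  proof
    fix x assume "x \<in> S"
    then have "g x < r / K" using S(3) by blast
    then have "K * g x < r" using K by (simp add: pos_less_divide_eq mult.commute)
    then show "x \<in> {x. K * g x < r}" by simp
  qed
  then show "\<exists>S. open S \<and> 0 \<in> S \<and> S \<subseteq> {x. K * g x < r}" using S(1,2) by blast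
qed

theorem lemma1p28:
  fixes av :: "'k::field \<Rightarrow> real"
    and se :: "'k \<Rightarrow> 'e::{ab_group_add,t2_space} \<Rightarrow> 'e"
    and sf :: "'k \<Rightarrow> 'f::{ab_group_add,t2_space} \<Rightarrow> 'f"
    and U D :: "'e set" and f :: "'e \<Rightarrow> 'f" and \<sigma> :: real
  assumes "valued_field av" and "tvs av se" and "tvs av sf"
    and "continuous_on U f"
    and "D \<subseteq> U" and "U \<subseteq> closure D"
    and "\<sigma> > 0"
    and "\<not> C0sigma av se sf U f \<sigma>"
  shows "\<exists>x0\<in>U. \<exists>q. gauge_on av sf q \<and>
           (\<forall>V p. nbhd_in U x0 V \<and> gauge_on av se p \<longrightarrow>
              (\<exists>x\<in>V \<inter> D. \<exists>y\<in>V \<inter> D. q (f x - f y) > p (x - y) powr \<sigma>))"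
proof -
  interpret E: vt av se using assms(1,2) by unfold_locales
  interpret F: vt av sf using assms(1,3) by unfold_locales
  note contf = assms(4) and DU = assms(5) and UD = assms(6) and sig = assms(7)
  from assms(8) obtain x0 q where x0: "x0 \<in> U" and gq: "gauge_on av sf q"
    and bad: "\<forall>p V. gauge_on av se p \<and> nbhd_in U x0 V \<longrightarrow>
                (\<exists>x\<in>V. \<exists>y\<in>V. \<not> q (f y - f x) \<le> p (y - x) powr \<sigma>)"
    unfolding C0sigma_def by blast
  have "\<forall>r>0. \<exists>S. open S \<and> 0 \<in> S \<and> S \<subseteq> {x. q x < r}" using gq unfolding gauge_on_def by blast
  then obtain S where S: "open S" "0 \<in> S" "S \<subseteq> {x. q x < 1}" using zero_less_one by blast
  have "(0::'f) - 0 \<in> S" using S(2) by simp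
  from F.sub_cont[OF S(1) this] obtain A B where AB: "open A" "open B" "(0::'f) \<in> A" "(0::'f) \<in> B"
    "\<forall>x\<in>A. \<forall>y\<in>B. x - y \<in> S" by blast
  define U1 where "U1 = A \<inter> {y. sf (-1) y \<in> B}"
  have oU1: "open U1" unfolding U1_def using AB(1) F.open_pre[OF AB(2)] by (rule open_Int)
  have U10: "0 \<in> U1" unfolding U1_def using AB(3,4) by simp
  have U1add: "u + u' \<in> S" if "u \<in> U1" "u' \<in> U1" for u u'
  proof -
    have "u \<in> A" "- u' \<in> B" using that unfolding U1_def by (auto simp: F.sm_minus)
    then have "u - (- u') \<in> S" using AB(5) by blast
    then show ?thesis by simp
  qed
  have clU1: "closure U1 \<subseteq> S"
  proof
    fix x assume x: "x \<in> closure U1"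
    have "x - x \<in> U1" using U10 by simp
    from F.sub_cont[OF oU1 this] obtain A' B' where A'B': "open A'" "open B'" "x \<in> A'" "x \<in> B'"
      "\<forall>a\<in>A'. \<forall>b\<in>B'. a - b \<in> U1" by blast
    have "(A' \<inter> B') \<inter> closure U1 \<noteq> {}" using x A'B'(3,4) by blast
    then have "(A' \<inter> B') \<inter> U1 \<noteq> {}" using open_Int_closure_eq_empty[of "A' \<inter> B'" U1] A'B'(1,2) by blast
    then obtain y where y: "y \<in> A'" "y \<in> B'" "y \<in> U1" by blast
    have "x - y \<in> U1" using A'B'(5) A'B'(3) y(2) by blast
    then have "(x - y) + y \<in> S" using y(3) by (rule U1add)
    then show "x \<in> S" by simp
  qed
  define C where "C = {v. \<forall>t. av t \<le> 1 \<longrightarrow> sf t v \<in> closure U1}"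
  have C_eq: "C = (\<Inter>t\<in>{t. av t \<le> 1}. {v. sf t v \<in> closure U1})" unfolding C_def by blast
  have cC: "closed C" unfolding C_eq
    by (rule closed_INT) (auto intro: F.closed_pre)
  have balC: "\<forall>t x. av t \<le> 1 \<and> x \<in> C \<longrightarrow> sf t x \<in> C"
  proof (intro allI impI)
    fix t x assume tx: "av t \<le> 1 \<and> x \<in> C"
    show "sf t x \<in> C" unfolding C_def
    proof (intro CollectI allI impI)
      fix t' assume t': "av t' \<le> 1"
      have "av (t' * t) \<le> 1" using t' tx F.av_nonneg[of t'] F.av_nonneg[of t]
        by (simp add: F.av_mult mult_le_one)
      then have "sf (t' * t) x \<in> closure U1" using tx unfolding C_def by blast
      then show "sf t' (sf t x) \<in> closure U1" by (simp add: F.sm_assoc)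
    qed
  qed
  have Cq: "C \<subseteq> {x. q x < 1}"
  proof
    fix v assume "v \<in> C"
    then have "\<forall>t. av t \<le> 1 \<longrightarrow> sf t v \<in> closure U1" unfolding C_def by simp
    then have "sf 1 v \<in> closure U1" using F.av_one by (metis order_refl)
    then have "v \<in> S" using clU1 by auto
    then show "v \<in> {x. q x < 1}" using S(3) by blast
  qed
  have "sf 0 0 \<in> U1" using U10 by simp
  from F.sm_cont[OF oU1 this] obtain d N where dN: "d > 0" "open N" "(0::'f) \<in> N"
    "\<forall>t x. av (t - 0) < d \<and> x \<in> N \<longrightarrow> sf t x \<in> U1" by blast
  obtain c where c: "c \<noteq> 0" "av c < d" using F.small dN(1) by blast
  define N' where "N' = {x. sf (inverse c) x \<in> N}"
  have oN': "open N'" unfolding N'_def using dN(2) by (rule F.open_pre)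
  have N'0: "0 \<in> N'" unfolding N'_def using dN(3) by simp
  have N'C: "N' \<subseteq> C"
  proof
    fix x assume x: "x \<in> N'"
    show "x \<in> C" unfolding C_def
    proof (intro CollectI allI impI)
      fix t assume t: "av t \<le> 1"
      have "av (t * c) \<le> av c" using t F.av_nonneg[of c] by (simp add: F.av_mult mult_left_le_one_le F.av_nonneg)
      then have "av (t * c - 0) < d" using c(2) by simp
      then have "sf (t * c) (sf (inverse c) x) \<in> U1" using dN(4) x unfolding N'_def by blast
      moreover have "t * c * inverse c = t" using c(1) by simp
      ultimately have "sf t x \<in> U1" by (metis F.sm_assoc)
      then show "sf t x \<in> closure U1" using closure_subset by blast
    qed
  qed
  define q' where "q' = mink av sf C"
  have gq': "gauge_on av sf q'" unfolding q'_def using oN' N'0 N'C by (rule F.mink_gauge)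
  have qq': "q v \<le> q' v" for v unfolding q'_def using oN' N'0 N'C gq Cq by (rule F.mink_dom)
  have lsc: "\<exists>M. open M \<and> v \<in> M \<and> (\<forall>w\<in>M. F.rho * q' v \<le> q' w)" if "0 < q' v" for v
    unfolding q'_def using oN' N'0 N'C cC balC that[unfolded q'_def] by (rule F.mink_lsc)
  show ?thesis
  proof (intro bexI[OF _ x0] exI[of _ q'] conjI gq' allI impI)
    fix V p assume Vp: "nbhd_in U x0 V \<and> gauge_on av se p"
    then have gp: "gauge_on av se p" by blast
    from Vp obtain W where W: "V \<subseteq> U" "open W" "x0 \<in> W" "U \<inter> W \<subseteq> V" unfolding nbhd_in_def by blast
    have "\<forall>r>0. \<exists>S. open S \<and> 0 \<in> S \<and> S \<subseteq> {x. p x < r}" using gp unfolding gauge_on_def by blast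
    then obtain SO where SO: "open SO" "0 \<in> SO" "SO \<subseteq> {x. p x < 1}" using zero_less_one by blast
    define p' where "p' = mink av se SO"
    have gp': "gauge_on av se p'" unfolding p'_def using SO(1,2) subset_refl by (rule E.mink_gauge)
    have pp': "p v \<le> p' v" for v unfolding p'_def using SO(1,2) subset_refl gp SO(3) by (rule E.mink_dom)
    have usc: "\<exists>M. open M \<and> v \<in> M \<and> (\<forall>w\<in>M. p' w < e)" if "p' v < e" for v e
      unfolding p'_def using SO(1,2) subset_refl SO(1) that[unfolded p'_def] by (rule E.mink_usc)
    have p'nn: "0 \<le> p' v" for v using gp' unfolding gauge_on_def by blast
    have q'nn: "0 \<le> q' v" for v using gq' unfolding gauge_on_def by blast
    define K where "K = F.rho powr (- 1 / \<sigma>)"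
    have K0: "0 < K" unfolding K_def using F.rho1 by simp
    have Kpow: "K powr \<sigma> = 1 / F.rho"
      unfolding K_def using sig F.rho1 by (simp add: powr_powr powr_neg_one)
    have gK: "gauge_on av se (\<lambda>v. K * p' v)" using gp' K0 by (rule gauge_scale)
    have nb: "nbhd_in U x0 (U \<inter> W)" unfolding nbhd_in_def using W(2,3) by blast
    from bad gK nb obtain x y where xy: "x \<in> U \<inter> W" "y \<in> U \<inter> W"
      and big: "\<not> q (f y - f x) \<le> (K * p' (y - x)) powr \<sigma>" by blast
    define a where "a = f y - f x"
    define b where "b = y - x"
    have "(K * p' b) powr \<sigma> = p' b powr \<sigma> / F.rho"
      using Kpow by (simp add: powr_mult)
    then have qa: "p' b powr \<sigma> / F.rho < q' a" using big qq'[of a] unfolding a_def b_def by simp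
    define T where "T = F.rho * q' a"
    have T1: "p' b powr \<sigma> < T" using qa F.rho1 unfolding T_def by (simp add: pos_divide_less_eq mult.commute)
    have T0: "0 < T" using T1 p'nn[of b] by (meson order_le_less_trans powr_ge_zero)
    have qa0: "0 < q' a" using T0 F.rho1 unfolding T_def by (simp add: zero_less_mult_iff)
    define e where "e = T powr (1 / \<sigma>)"
    have "(p' b powr \<sigma>) powr (1 / \<sigma>) < e" unfolding e_def
      using T1 sig by (intro powr_less_mono2) auto
    then have pbe: "p' b < e" using sig p'nn[of b] by (simp add: powr_powr powr_one)
    have eT: "e powr \<sigma> = T" unfolding e_def using sig T0 by (simp add: powr_powr)
    obtain MF where MF: "open MF" "a \<in> MF" "\<forall>w\<in>MF. T \<le> q' w"
      using lsc[OF qa0] unfolding T_def by blast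
    obtain A1 B1 where A1B1: "open A1" "open B1" "f y \<in> A1" "f x \<in> B1" "\<forall>u\<in>A1. \<forall>v\<in>B1. u - v \<in> MF"
      using F.sub_cont[OF MF(1), of "f y" "f x"] MF(2) unfolding a_def by blast
    obtain ME where ME: "open ME" "b \<in> ME" "\<forall>w\<in>ME. p' w < e" using usc[OF pbe] by blast
    obtain A2 B2 where A2B2: "open A2" "open B2" "y \<in> A2" "x \<in> B2" "\<forall>u\<in>A2. \<forall>v\<in>B2. u - v \<in> ME"
      using E.sub_cont[OF ME(1), of y x] ME(2) unfolding b_def by blast
    have ci: "\<forall>B. open B \<longrightarrow> (\<exists>A. open A \<and> A \<inter> U = f -` B \<inter> U)"
      using contf continuous_on_open_invariant by blast
    obtain G1 where G1: "open G1" "G1 \<inter> U = f -` A1 \<inter> U" using ci A1B1(1) by blast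
    obtain G2 where G2: "open G2" "G2 \<inter> U = f -` B1 \<inter> U" using ci A1B1(2) by blast
    have yG1: "y \<in> G1" using G1(2) xy(2) A1B1(3) by blast
    have xG2: "x \<in> G2" using G2(2) xy(1) A1B1(4) by blast
    define X1 where "X1 = G1 \<inter> A2 \<inter> W"
    define X2 where "X2 = G2 \<inter> B2 \<inter> W"
    have oX1: "open X1" unfolding X1_def using G1(1) A2B2(1) W(2) by blast
    have oX2: "open X2" unfolding X2_def using G2(1) A2B2(2) W(2) by blast
    have "y \<in> X1" unfolding X1_def using yG1 A2B2(3) xy(2) by blast
    then have "X1 \<inter> closure D \<noteq> {}" using xy(2) UD by blast
    then have "X1 \<inter> D \<noteq> {}" using open_Int_closure_eq_empty[OF oX1] by blast
    then obtain x1 where x1: "x1 \<in> X1" "x1 \<in> D" by blast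
    have "x \<in> X2" unfolding X2_def using xG2 A2B2(4) xy(1) by blast
    then have "X2 \<inter> closure D \<noteq> {}" using xy(1) UD by blast
    then have "X2 \<inter> D \<noteq> {}" using open_Int_closure_eq_empty[OF oX2] by blast
    then obtain y1 where y1: "y1 \<in> X2" "y1 \<in> D" by blast
    have x1U: "x1 \<in> U" using x1(2) DU by blast
    have y1U: "y1 \<in> U" using y1(2) DU by blast
    have x1V: "x1 \<in> V \<inter> D" using x1 x1U W(4) unfolding X1_def by blast
    have y1V: "y1 \<in> V \<inter> D" using y1 y1U W(4) unfolding X2_def by blast
    have "f x1 \<in> A1" using G1(2) x1(1) x1U unfolding X1_def by blast
    moreover have "f y1 \<in> B1" using G2(2) y1(1) y1U unfolding X2_def by blast
    ultimately have "f x1 - f y1 \<in> MF" using A1B1(5) by blast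
    then have hq: "T \<le> q' (f x1 - f y1)" using MF(3) by blast
    have "x1 - y1 \<in> ME" using A2B2(5) x1(1) y1(1) unfolding X1_def X2_def by blast
    then have "p' (x1 - y1) < e" using ME(3) by blast
    then have "p (x1 - y1) < e" using pp'[of "x1 - y1"] by linarith
    moreover have "0 \<le> p (x1 - y1)" using gp unfolding gauge_on_def by blast
    ultimately have "p (x1 - y1) powr \<sigma> < e powr \<sigma>" using sig by (intro powr_less_mono2) auto
    then have "p (x1 - y1) powr \<sigma> < q' (f x1 - f y1)" using eT hq by simp
    then show "\<exists>x\<in>V \<inter> D. \<exists>y\<in>V \<inter> D. p (x - y) powr \<sigma> < q' (f x - f y)"
      using x1V y1V by blast
  qed
qed

end
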